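(* For all $\{\sigma_{i,A}\;\vert\; i\in I\}\subseteq\mathfrak{S}_A$ and $\sigma_B\in\mathfrak{S}_B$, $$\iota(\inf^{\mathfrak{S}_A}_{i\in I}\sigma_{i,A},\sigma_B)=\inf^{\check{S}_{AB}}_{i\in I}\iota(\sigma_{i,A},\sigma_B),$$ and for all $\{\sigma_{i,B}\;\vert\; i\in I\}\subseteq\mathfrak{S}_B$ and $\sigma_A\in\mathfrak{S}_A$, $$\iota(\sigma_A,\inf^{\mathfrak{S}_B}_{i\in I}\sigma_{i,B})=\inf^{\check{S}_{AB}}_{i\in I}\iota(\sigma_A,\sigma_{i,B}).$$
   Context: $\mathfrak{B}=\{\mathbf{Y},\mathbf{N},\bot\}$ with $\bot$ below the incomparable $\mathbf{Y},\mathbf{N}$, meet $\wedge$, involution $\overline{\cdot}$ exchanging $\mathbf{Y},\mathbf{N}$, and commutative product $\bullet$ with $x\bullet\mathbf{Y}=x$, $x\bullet\mathbf{N}=\mathbf{N}$, $\bot\bullet\bot=\bot$. $(\mathfrak{S}_A,\mathfrak{E}_A,\epsilon^{\mathfrak{S}_A})$, $(\mathfrak{S}_B,\mathfrak{E}_B,\epsilon^{\mathfrak{S}_B})$ are States/Effects Chu spaces (down-complete Inf semi-lattices of states and effects, infima written $\inf$, evaluation maps preserving infima in each variable, with negation of effects and a constant-$\mathbf{Y}$ effect $\mathfrak{Y}_{\mathfrak{E}}$). $\check{S}_{AB}$ is the maximal tensor product: the set of maps $\Phi:\mathfrak{E}_A\times\mathfrak{E}_B\to\mathfrak{B}$ preserving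 arbitrary infima in each variable, with $\Phi(\overline{\mathfrak{l}_A},\mathfrak{Y}_{\mathfrak{E}_B})=\overline{\Phi(\mathfrak{l}_A,\mathfrak{Y}_{\mathfrak{E}_B})}$, $\Phi(\mathfrak{Y}_{\mathfrak{E}_A},\overline{\mathfrak{l}_B})=\overline{\Phi(\mathfrak{Y}_{\mathfrak{E}_A},\mathfrak{l}_B)}$, $\Phi(\mathfrak{Y}_{\mathfrak{E}_A},\mathfrak{Y}_{\mathfrak{E}_B})=\mathbf{Y}$, ordered pointwise (infima computed pointwise). The pure tensor embedding $\iota:\mathfrak{S}_A\times\mathfrak{S}_B\to\check{S}_{AB}$ is $\iota(\sigma_A,\sigma_B)(\mathfrak{l}_A,\mathfrak{l}_B)=\epsilon^{\mathfrak{S}_A}_{\mathfrak{l}_A}(\sigma_A)\bullet\epsilon^{\mathfrak{S}_B}_{\mathfrak{l}_B}(\sigma_B)$. *)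

theory Defs
  imports Main
begin

datatype B = Yb | Nb | Botb

definition leB :: "B \<Rightarrow> B \<Rightarrow> bool" where
  "leB x y \<longleftrightarrow> x = y \<or> x = Botb"

fun meetB :: "B \<Rightarrow> B \<Rightarrow> B" where
  "meetB x y = (if x = y then x else Botb)"

fun barB :: "B \<Rightarrow> B" where
  "barB Yb = Nb" | "barB Nb = Yb" | "barB Botb = Botb"

fun prodB :: "B \<Rightarrow> B \<Rightarrow> B" where
  "prodB x Yb = x"
| "prodB x Nb = Nb"
| "prodB Yb Botb = Botb"
| "prodB Nb Botb = Nb"
| "prodB Botb Botb = Botb"

definition is_glb :: "('a \<Rightarrow> 'a \<Rightarrow> bool) \<Rightarrow> 'a set \<Rightarrow> 'a \<Rightarrow> bool" where
  "is_glb le A x \<longleftrightarrow> (\<forall>a\<in>A. le x a) \<and> (\<forall>y. (\<forall>a\<in>A. le y a) \<longrightarrow> le y x)"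

definition glb :: "('a \<Rightarrow> 'a \<Rightarrow> bool) \<Rightarrow> 'a set \<Rightarrow> 'a" where
  "glb le A = (THE x. is_glb le A x)"

definition partial_order_rel :: "('a \<Rightarrow> 'a \<Rightarrow> bool) \<Rightarrow> bool" where
  "partial_order_rel le \<longleftrightarrow> (\<forall>x. le x x) \<and> (\<forall>x y. le x y \<longrightarrow> le y x \<longrightarrow> x = y)
     \<and> (\<forall>x y z. le x y \<longrightarrow> le y z \<longrightarrow> le x z)"

definition down_complete_inf_semilattice :: "('a \<Rightarrow> 'a \<Rightarrow> bool) \<Rightarrow> bool" where
  "down_complete_inf_semilattice le \<longleftrightarrow> partial_order_rel le
     \<and> (\<forall>A. A \<noteq> {} \<longrightarrow> (\<exists>x. is_glb le A x))"

abbreviation infB :: "B set \<Rightarrow> B" where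
  "infB A \<equiv> glb leB A"

text \<open>States carry the order leS, effects the order leE, eps l s is the evaluation
  of effect l on state s, negE is the negation of effects, YE is the constant-Y effect.\<close>
definition SE_chu_space ::
  "('s \<Rightarrow> 's \<Rightarrow> bool) \<Rightarrow> ('e \<Rightarrow> 'e \<Rightarrow> bool) \<Rightarrow> ('e \<Rightarrow> 's \<Rightarrow> B) \<Rightarrow> ('e \<Rightarrow> 'e) \<Rightarrow> 'e \<Rightarrow> bool" where
  "SE_chu_space leS leE eps negE YE \<longleftrightarrow>
     down_complete_inf_semilattice leS \<and> down_complete_inf_semilattice leE
   \<and> (\<forall>l A. A \<noteq> {} \<longrightarrow> eps l (glb leS A) = infB ((\<lambda>s. eps l s) ` A))
   \<and> (\<forall>s A. A \<noteq> {} \<longrightarrow> eps (glb leE A) s = infB ((\<lambda>l. eps l s) ` A))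
   \<and> (\<forall>l. negE (negE l) = l)
   \<and> (\<forall>l s. eps (negE l) s = barB (eps l s))
   \<and> (\<forall>s. eps YE s = Yb)"

definition preserves_inf_each :: "('ea \<Rightarrow> 'ea \<Rightarrow> bool) \<Rightarrow> ('eb \<Rightarrow> 'eb \<Rightarrow> bool)
    \<Rightarrow> ('ea \<Rightarrow> 'eb \<Rightarrow> B) \<Rightarrow> bool" where
  "preserves_inf_each leEA leEB \<Phi> \<longleftrightarrow>
     (\<forall>lb A. A \<noteq> {} \<longrightarrow> \<Phi> (glb leEA A) lb = infB ((\<lambda>la. \<Phi> la lb) ` A))
   \<and> (\<forall>la A. A \<noteq> {} \<longrightarrow> \<Phi> la (glb leEB A) = infB ((\<lambda>lb. \<Phi> la lb) ` A))"

definition max_tensor ::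
  "('ea \<Rightarrow> 'ea \<Rightarrow> bool) \<Rightarrow> ('ea \<Rightarrow> 'ea) \<Rightarrow> 'ea \<Rightarrow>
   ('eb \<Rightarrow> 'eb \<Rightarrow> bool) \<Rightarrow> ('eb \<Rightarrow> 'eb) \<Rightarrow> 'eb \<Rightarrow> ('ea \<Rightarrow> 'eb \<Rightarrow> B) set" where
  "max_tensor leEA negA YA leEB negB YB =
    {\<Phi>. preserves_inf_each leEA leEB \<Phi>
       \<and> (\<forall>la. \<Phi> (negA la) YB = barB (\<Phi> la YB))
       \<and> (\<forall>lb. \<Phi> YA (negB lb) = barB (\<Phi> YA lb))
       \<and> \<Phi> YA YB = Yb}"

definition le_tensor :: "('ea \<Rightarrow> 'eb \<Rightarrow> B) \<Rightarrow> ('ea \<Rightarrow> 'eb \<Rightarrow> B) \<Rightarrow> bool" where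
  "le_tensor \<Phi> \<Psi> \<longleftrightarrow> (\<forall>la lb. leB (\<Phi> la lb) (\<Psi> la lb))"

definition inf_tensor :: "('ea \<Rightarrow> 'eb \<Rightarrow> B) set \<Rightarrow> ('ea \<Rightarrow> 'eb \<Rightarrow> B)" where
  "inf_tensor F = (\<lambda>la lb. infB ((\<lambda>\<Phi>. \<Phi> la lb) ` F))"

definition iota :: "('ea \<Rightarrow> 'sa \<Rightarrow> B) \<Rightarrow> ('eb \<Rightarrow> 'sb \<Rightarrow> B) \<Rightarrow> 'sa \<Rightarrow> 'sb \<Rightarrow> ('ea \<Rightarrow> 'eb \<Rightarrow> B)" where
  "iota epsA epsB sa sb = (\<lambda>la lb. prodB (epsA la sa) (epsB lb sb))"

end

theory Submission
  imports Defs
begin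

lemma glb_unique:
  assumes "is_glb leB S v"
  shows "infB S = v"
proof -
  have u: "\<And>y. is_glb leB S y \<Longrightarrow> y = v"
    using assms unfolding is_glb_def leB_def by blast
  show ?thesis unfolding glb_def using assms u by (rule the_equality)
qed

lemma infB_const:
  assumes "S = {x}"
  shows "infB S = x"
  by (rule glb_unique) (auto simp: assms is_glb_def leB_def)

lemma infB_bot:
  assumes "a \<in> S" "b \<in> S" "a \<noteq> b"
  shows "infB S = Botb"
proof (rule glb_unique)
  have "\<And>y. (\<forall>x\<in>S. leB y x) \<Longrightarrow> leB y Botb"
  proof -
    fix y assume h: "\<forall>x\<in>S. leB y x"
    have "y = a \<or> y = Botb" "y = b \<or> y = Botb" using h assms(1,2) unfolding leB_def by auto
    then show "leB y Botb" using assms(3) unfolding leB_def by auto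
  qed
  then show "is_glb leB S Botb" unfolding is_glb_def by (simp add: leB_def)
qed

lemma infB_botin:
  assumes "Botb \<in> S"
  shows "infB S = Botb"
proof (rule glb_unique)
  have "\<And>y. (\<forall>x\<in>S. leB y x) \<Longrightarrow> leB y Botb"
    using assms unfolding leB_def by auto
  then show "is_glb leB S Botb" unfolding is_glb_def by (simp add: leB_def)
qed

lemma prodB_comm: "prodB a b = prodB b a"
  by (cases a; cases b; simp)

lemma set_cases:
  assumes "S \<noteq> {}"
  obtains x where "S = {x}" | a b where "a \<in> S" "b \<in> S" "a \<noteq> b"
  using assms by blast

lemma prodB_inf:
  assumes "S \<noteq> {}"
  shows "prodB (infB S) b = infB ((\<lambda>a. prodB a b) ` S)"
  using assms
proof (cases rule: set_cases)
  case (1 x)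
  then show ?thesis by (simp add: infB_const)
next
  case (2 a c)
  then have L: "infB S = Botb" by (rule infB_bot)
  show ?thesis
  proof (cases b)
    case Yb then show ?thesis by simp
  next
    case Nb
    then have "(\<lambda>a. prodB a b) ` S = {Nb}" using assms by auto
    then show ?thesis using Nb L by (simp add: infB_const)
  next
    case Botb
    have "Nb \<in> S \<or> Botb \<in> S" using 2 by (cases a; cases c; simp)
    then show ?thesis
    proof
      assume "Botb \<in> S"
      then have "Botb \<in> (\<lambda>a. prodB a b) ` S" using Botb by force
      then show ?thesis using L Botb by (simp add: infB_botin)
    next
      assume n: "Nb \<in> S"
      have "\<exists>d\<in>S. d \<noteq> Nb" using 2 by metis
      then obtain d where "d \<in> S" "d \<noteq> Nb" by blast
      then have "Botb \<in> (\<lambda>a. prodB a b) ` S" using Botb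
        by (cases d; force)
      then show ?thesis using L Botb by (simp add: infB_botin)
    qed
  qed
qed

theorem mainTheorem2:
  fixes leSA :: "'sa \<Rightarrow> 'sa \<Rightarrow> bool" and leEA :: "'ea \<Rightarrow> 'ea \<Rightarrow> bool"
    and epsA :: "'ea \<Rightarrow> 'sa \<Rightarrow> B" and negA :: "'ea \<Rightarrow> 'ea" and YA :: 'ea
    and leSB :: "'sb \<Rightarrow> 'sb \<Rightarrow> bool" and leEB :: "'eb \<Rightarrow> 'eb \<Rightarrow> bool"
    and epsB :: "'eb \<Rightarrow> 'sb \<Rightarrow> B" and negB :: "'eb \<Rightarrow> 'eb" and YB :: 'eb
  assumes A: "SE_chu_space leSA leEA epsA negA YA"
    and B: "SE_chu_space leSB leEB epsB negB YB"
  shows "(\<forall>(I :: 'i set) (\<sigma>A :: 'i \<Rightarrow> 'sa) \<sigma>B. I \<noteq> {} \<longrightarrow>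
            iota epsA epsB (glb leSA (\<sigma>A ` I)) \<sigma>B
              = inf_tensor ((\<lambda>i. iota epsA epsB (\<sigma>A i) \<sigma>B) ` I))
       \<and> (\<forall>(I :: 'i set) (\<sigma>B :: 'i \<Rightarrow> 'sb) \<sigma>A. I \<noteq> {} \<longrightarrow>
            iota epsA epsB \<sigma>A (glb leSB (\<sigma>B ` I))
              = inf_tensor ((\<lambda>i. iota epsA epsB \<sigma>A (\<sigma>B i)) ` I))"
proof (intro conjI allI impI)
  fix I :: "'i set" and \<sigma>A :: "'i \<Rightarrow> 'sa" and \<sigma>B
  assume I: "I \<noteq> {}"
  have e: "\<And>l. epsA l (glb leSA (\<sigma>A ` I)) = infB ((\<lambda>i. epsA l (\<sigma>A i)) ` I)"
    using A I unfolding SE_chu_space_def by (simp add: image_image)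
  show "iota epsA epsB (glb leSA (\<sigma>A ` I)) \<sigma>B
              = inf_tensor ((\<lambda>i. iota epsA epsB (\<sigma>A i) \<sigma>B) ` I)"
    unfolding iota_def inf_tensor_def
  proof (intro ext)
    fix la lb
    show "prodB (epsA la (glb leSA (\<sigma>A ` I))) (epsB lb \<sigma>B) =
         infB ((\<lambda>\<Phi>. \<Phi> la lb) ` (\<lambda>i la lb. prodB (epsA la (\<sigma>A i)) (epsB lb \<sigma>B)) ` I)"
      unfolding e prodB_inf[of "(\<lambda>i. epsA la (\<sigma>A i)) ` I", OF _] using I
      by (simp add: image_image prodB_inf)
  qed
next
  fix I :: "'i set" and \<sigma>B :: "'i \<Rightarrow> 'sb" and \<sigma>A
  assume I: "I \<noteq> {}"
  have e: "\<And>l. epsB l (glb leSB (\<sigma>B ` I)) = infB ((\<lambda>i. epsB l (\<sigma>B i)) ` I)"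
    using B I unfolding SE_chu_space_def by (simp add: image_image)
  show "iota epsA epsB \<sigma>A (glb leSB (\<sigma>B ` I))
              = inf_tensor ((\<lambda>i. iota epsA epsB \<sigma>A (\<sigma>B i)) ` I)"
    unfolding iota_def inf_tensor_def
  proof (intro ext)
    fix la lb
    have "prodB (epsA la \<sigma>A) (epsB lb (glb leSB (\<sigma>B ` I)))
        = prodB (infB ((\<lambda>i. epsB lb (\<sigma>B i)) ` I)) (epsA la \<sigma>A)"
      by (simp add: e prodB_comm)
    also have "\<dots> = infB ((\<lambda>i. prodB (epsB lb (\<sigma>B i)) (epsA la \<sigma>A)) ` I)"
      using I by (simp add: prodB_inf image_image)
    finally show "prodB (epsA la \<sigma>A) (epsB lb (glb leSB (\<sigma>B ` I))) =
         infB ((\<lambda>\<Phi>. \<Phi> la lb) ` (\<lambda>i la lb. prodB (epsA la \<sigma>A) (epsB lb (\<sigma>B i))) ` I)"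
      by (simp add: image_image prodB_comm)
  qed
qed

end
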